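(* Let $n\geq4$, $D_n=\{x\in\mathbb{Z}^n:\sum_i x_i\equiv0\bmod2\}$, $\mathcal{P}$ its Voronoi region with vertex set $V_{\mathcal{P}}$, and $D_n^\#$ the dual lattice. Let $\tilde G$ be the Cayley graph on $\frac12D_n^\#$ with generating set $\frac12V_{\mathcal{P}}$, with graph distance $\tilde d$. Then for all $u_1,u_2\in\frac12D_n^\#$, $\tilde d(u_1,u_2)=2$ implies $\Vert u_1-u_2\Vert_{\mathcal{P}}=1$.
   Context: The Voronoi region of a lattice $\Lambda\subset\mathbb{R}^n$ is $\{z:\langle z-x,z-x\rangle\geq\langle z,z\rangle\ \forall x\in\Lambda\}$; $D_n^\#=\{y:\langle x,y\rangle\in\mathbb{Z}\ \forall x\in D_n\}$. $\Vert x\Vert_{\mathcal{P}}=\inf\{\lambda\geq0:x\in\lambda\mathcal{P}\}$, which for this $\mathcal{P}$ equals $\max_{i\neq j}(|x_i|+|x_j|)$. It is known that $V_{\mathcal{P}}$ consists of the $2n$ vectors $\pm e_i$ and the $2^n$ vectors $(\pm\frac12,\dots,\pm\frac12)$. In the Cayley graph, $x,y$ are adjacent iff $x-y\in\frac12V_{\mathcal{P}}$. *)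

theory Defs
  imports "HOL-Analysis.Analysis" "HOL-Library.Extended_Nat"
begin

definition Dn :: "(real^'n) set" where
  "Dn = {x. (\<forall>i. x $ i \<in> \<int>) \<and> (\<Sum>i\<in>UNIV. x $ i) / 2 \<in> \<int>}"

definition voronoi :: "(real^'n) set \<Rightarrow> (real^'n) set" where
  "voronoi L = {z. \<forall>x\<in>L. (z - x) \<bullet> (z - x) \<ge> z \<bullet> z}"

definition dual_lattice :: "(real^'n) set \<Rightarrow> (real^'n) set" where
  "dual_lattice L = {y. \<forall>x\<in>L. x \<bullet> y \<in> \<int>}"

definition vertices :: "(real^'n) set \<Rightarrow> (real^'n) set" where
  "vertices P = {v. v extreme_point_of P}"

definition gauge_norm :: "(real^'n) set \<Rightarrow> real^'n \<Rightarrow> real" where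
  "gauge_norm P x = Inf {t. t \<ge> 0 \<and> x \<in> (\<lambda>v. t *\<^sub>R v) ` P}"

definition scale_set :: "real \<Rightarrow> (real^'n) set \<Rightarrow> (real^'n) set" where
  "scale_set c A = (\<lambda>v. c *\<^sub>R v) ` A"

fun cayley_walk :: "(real^'n) set \<Rightarrow> (real^'n) set \<Rightarrow> nat \<Rightarrow> real^'n \<Rightarrow> real^'n \<Rightarrow> bool" where
  "cayley_walk A S 0 u v \<longleftrightarrow> u \<in> A \<and> u = v"
| "cayley_walk A S (Suc k) u v \<longleftrightarrow> (\<exists>w\<in>A. cayley_walk A S k u w \<and> v \<in> A \<and> w - v \<in> S)"

text \<open>Graph distance (infinity if not connected).\<close>
definition cayley_dist :: "(real^'n) set \<Rightarrow> (real^'n) set \<Rightarrow> real^'n \<Rightarrow> real^'n \<Rightarrow> enat" where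
  "cayley_dist A S u v = (INF k\<in>{k. cayley_walk A S k u v}. enat k)"

end

theory Submission
  imports Defs
begin

definition QQ :: "(real^'n) set" where
  "QQ = {z. \<forall>i j. i \<noteq> j \<longrightarrow> \<bar>z$i\<bar> + \<bar>z$j\<bar> \<le> 1}"

lemma int_abs_le_sq: "\<bar>(y::int)\<bar> \<le> y^2"
proof (cases "y = 0")
  case False
  then have "1 \<le> \<bar>y\<bar>" by linarith
  then have "\<bar>y\<bar> * 1 \<le> \<bar>y\<bar> * \<bar>y\<bar>" by (intro mult_left_mono) auto
  then show ?thesis by (simp add: power2_eq_square)
qed simp

lemma other_idx:
  fixes i :: "'n::finite"
  assumes "CARD('n) \<ge> 2" shows "\<exists>j. j \<noteq> i"
proof (rule ccontr)
  assume a: "\<not> (\<exists>j. j \<noteq> i)"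
  have u: "UNIV = {i}" using a by auto
  have "card (UNIV::'n set) = 1" by (subst u) simp
  then show False using assms by simp
qed

lemma two_other_idx:
  fixes i :: "'n::finite"
  assumes "CARD('n) \<ge> 3" shows "\<exists>j l. j \<noteq> i \<and> l \<noteq> i \<and> j \<noteq> l"
proof (rule ccontr)
  assume a: "\<not> (\<exists>j l. j \<noteq> i \<and> l \<noteq> i \<and> j \<noteq> l)"
  have "card (UNIV - {i}) \<le> Suc 0" using a by (subst card_le_Suc0_iff_eq) auto
  moreover have "card (UNIV - {i}) = CARD('n) - 1" by (simp add: card_Diff_singleton)
  ultimately show False using assms by simp
qed

lemma core:
  fixes z :: "'n::finite \<Rightarrow> real" and y :: "'n \<Rightarrow> int"
  assumes Q: "\<forall>i j. i \<noteq> j \<longrightarrow> \<bar>z i\<bar> + \<bar>z j\<bar> \<le> 1"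
    and ev: "even (\<Sum>i\<in>UNIV. y i)" and c: "CARD('n) \<ge> 2"
  shows "(\<Sum>i\<in>UNIV. 2 * z i * y i) \<le> (\<Sum>i\<in>UNIV. (of_int (y i))^2)"
proof -
  define f where "f i = 2 * \<bar>z i\<bar> * \<bar>of_int (y i)\<bar> - (of_int (y i))^2" for i
  have z1: "\<bar>z i\<bar> \<le> 1" for i
  proof -
    obtain j where "j \<noteq> i" using other_idx[OF c, of i] by blast
    then have "i \<noteq> j" by simp
    then have "\<bar>z i\<bar> + \<bar>z j\<bar> \<le> 1" by (rule Q[rule_format])
    then show ?thesis by linarith
  qed
  have yabs: "\<bar>real_of_int (y i)\<bar> \<le> (real_of_int (y i))^2" for i
  proof -
    have "real_of_int \<bar>y i\<bar> \<le> real_of_int ((y i)^2)" by (simp only: of_int_le_iff) (rule int_abs_le_sq)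
    then show ?thesis by simp
  qed
  have tm: "2 * z i * y i - (of_int (y i))^2 \<le> f i" for i
  proof -
    have "2 * z i * y i \<le> 2 * \<bar>z i\<bar> * \<bar>of_int (y i)\<bar>"
    proof -
      have "z i * y i \<le> \<bar>z i * y i\<bar>" by (rule abs_ge_self)
      also have "\<dots> = \<bar>z i\<bar> * \<bar>real_of_int (y i)\<bar>" by (rule abs_mult)
      finally show ?thesis by linarith
    qed
    then show ?thesis unfolding f_def by linarith
  qed
  have fsmall: "f i \<le> 0" if "\<bar>z i\<bar> \<le> 1/2" for i
  proof -
    have "2 * \<bar>z i\<bar> * \<bar>of_int (y i)\<bar> \<le> 1 * \<bar>of_int (y i)\<bar>"
      using that by (intro mult_right_mono) auto
    then show ?thesis unfolding f_def using yabs[of i] by linarith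
  qed
  have "(\<Sum>i\<in>UNIV. f i) \<le> 0"
  proof (cases "\<forall>i. \<bar>z i\<bar> \<le> 1/2")
    case True
    then show ?thesis using fsmall by (simp add: sum_nonpos)
  next
    case False
    then obtain k where k: "\<bar>z k\<bar> > 1/2" using not_le by blast
    have others: "f j \<le> 0" if "j \<noteq> k" for j
      using Q that k fsmall[of j] by force
    show ?thesis
    proof (cases "\<bar>y k\<bar> = 1")
      case False
      have "\<bar>y k\<bar> = 0 \<or> \<bar>y k\<bar> \<ge> 2" using False by linarith
      then have "2 * \<bar>y k\<bar> \<le> (y k)^2"
      proof
        assume "\<bar>y k\<bar> \<ge> 2"
        then have "2 * \<bar>y k\<bar> \<le> \<bar>y k\<bar> * \<bar>y k\<bar>" by (intro mult_right_mono) auto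
        then show ?thesis by (simp add: power2_eq_square)
      qed simp
      then have "real_of_int (2 * \<bar>y k\<bar>) \<le> real_of_int ((y k)^2)" by (simp only: of_int_le_iff)
      then have A: "2 * \<bar>real_of_int (y k)\<bar> \<le> (real_of_int (y k))^2" by simp
      have "2 * \<bar>z k\<bar> * \<bar>of_int (y k)\<bar> \<le> 2 * 1 * \<bar>real_of_int (y k)\<bar>"
        using z1[of k] by (intro mult_right_mono) auto
      then have "f k \<le> 0" unfolding f_def using A by linarith
      then have "\<forall>i. f i \<le> 0" using others by (metis (full_types))
      then show ?thesis by (simp add: sum_nonpos)
    next
      case True
      have sk: "sum y UNIV = y k + sum y (UNIV - {k})" by (simp add: sum.remove)
      have "odd (y k)" using True by (cases "y k \<ge> 0") auto
      then have "odd (sum y (UNIV - {k}))" using ev sk by simp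
      have "\<exists>j\<in>UNIV - {k}. odd (y j)"
      proof (rule ccontr)
        assume "\<not> (\<exists>j\<in>UNIV - {k}. odd (y j))"
        then have "\<And>j. j \<in> UNIV - {k} \<Longrightarrow> 2 dvd y j" by blast
        then have "2 dvd sum y (UNIV - {k})" by (rule dvd_sum)
        then show False using \<open>odd (sum y (UNIV - {k}))\<close> by contradiction
      qed
      then obtain j where j: "j \<noteq> k" "odd (y j)" by blast
      have yj1: "\<bar>real_of_int (y j)\<bar> \<ge> 1" using j(2) 
      proof -
        have "y j \<noteq> 0" using j(2) by auto
        then have "\<bar>y j\<bar> \<ge> 1" by linarith
        then have "real_of_int 1 \<le> real_of_int \<bar>y j\<bar>" by (simp only: of_int_le_iff)
        then show ?thesis by simp
      qed
      have "k \<noteq> j" using j(1) by simp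
      then have "\<bar>z k\<bar> + \<bar>z j\<bar> \<le> 1" by (rule Q[rule_format])
      then have zj: "\<bar>z j\<bar> \<le> 1 - \<bar>z k\<bar>" by linarith
      have fj: "f j \<le> 2 * (1 - \<bar>z k\<bar>) * \<bar>of_int (y j)\<bar> - (of_int (y j))^2"
      proof -
        have "\<bar>z j\<bar> * \<bar>real_of_int (y j)\<bar> \<le> (1 - \<bar>z k\<bar>) * \<bar>real_of_int (y j)\<bar>"
          using zj by (rule mult_right_mono) simp
        then show ?thesis unfolding f_def by linarith
      qed
      have fk: "f k = 2 * \<bar>z k\<bar> - 1"
      proof -
        have "\<bar>real_of_int (y k)\<bar> = 1" 
        proof -
          have "real_of_int \<bar>y k\<bar> = real_of_int 1" using True by (simp only: of_int_eq_iff)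
          then show ?thesis by simp
        qed
        moreover have "(real_of_int (y k))^2 = 1"
        proof -
          have "real_of_int (y k) = 1 \<or> real_of_int (y k) = -1" using \<open>\<bar>real_of_int (y k)\<bar> = 1\<close> by linarith
          then show ?thesis by auto
        qed
        ultimately show ?thesis unfolding f_def by simp
      qed
      define Y where "Y = \<bar>real_of_int (y j)\<bar>"
      have p: "\<bar>z k\<bar> * (Y - 1) \<ge> 0" using yj1 unfolding Y_def by simp
      have fj': "f j \<le> 2 * (1 - \<bar>z k\<bar>) * Y - Y^2" using fj unfolding Y_def by simp
      have e: "2 * (1 - \<bar>z k\<bar>) * Y - Y^2 + (2 * \<bar>z k\<bar> - 1) = - ((Y - 1)^2) - 2 * (\<bar>z k\<bar> * (Y - 1))"
        by (simp add: algebra_simps power2_eq_square)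
      have "(Y - 1)^2 \<ge> 0" by simp
      then have "f k + f j \<le> 0" using fj' fk p e by linarith
      have s1: "sum f UNIV = f k + sum f (UNIV - {k})" by (simp add: sum.remove)
      have s2: "sum f (UNIV - {k}) = f j + sum f (UNIV - {k} - {j})" using j(1) by (simp add: sum.remove)
      have "sum f (UNIV - {k} - {j}) \<le> 0" using others by (intro sum_nonpos) auto
      then show ?thesis using s1 s2 \<open>f k + f j \<le> 0\<close> by linarith
    qed
  qed
  moreover have "(\<Sum>i\<in>UNIV. 2 * z i * y i - (of_int (y i))^2) \<le> (\<Sum>i\<in>UNIV. f i)"
    using tm by (intro sum_mono) auto
  moreover have "(\<Sum>i\<in>UNIV. 2 * z i * y i - (of_int (y i))^2) = (\<Sum>i\<in>UNIV. 2 * z i * y i) - (\<Sum>i\<in>UNIV. (of_int (y i))^2)"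
    by (rule sum_subtractf)
  ultimately show ?thesis by linarith
qed


lemma inner_expand: "((z::real^'n) - x) \<bullet> (z - x) = z \<bullet> z - 2 * (z \<bullet> x) + x \<bullet> x"
  by (simp add: inner_diff_left inner_diff_right inner_commute)

lemma sign_choice: "\<exists>s::real. (s = 1 \<or> s = -1) \<and> s * a = \<bar>a\<bar>"
proof (cases "a \<ge> 0")
  case True then show ?thesis by (intro exI[of _ 1]) simp
next
  case False then show ?thesis by (intro exI[of _ "-1"]) simp
qed

lemma P_sub_Q:
  assumes "CARD('n) \<ge> 2"
  shows "voronoi (Dn :: (real^'n) set) \<subseteq> QQ"
proof
  fix z :: "real^'n" assume z: "z \<in> voronoi Dn"
  show "z \<in> QQ" unfolding QQ_def
  proof (intro CollectI allI impI)
    fix i j :: 'n assume ij: "i \<noteq> j"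
    obtain s where s: "s = 1 \<or> s = -1" "s * z$i = \<bar>z$i\<bar>" using sign_choice by blast
    obtain t where t: "t = 1 \<or> t = -1" "t * z$j = \<bar>z$j\<bar>" using sign_choice by blast
    define x where "x = s *\<^sub>R axis i (1::real) + t *\<^sub>R axis j 1"
    have xc: "x $ l = (if l = i then s else 0) + (if l = j then t else 0)" for l
      unfolding x_def by (simp add: axis_def)
    have "x \<in> Dn"
    proof -
      have "\<forall>l. x $ l \<in> \<int>" unfolding xc using s(1) t(1) by auto
      moreover have "(\<Sum>l\<in>UNIV. x $ l) = s + t" unfolding xc by (simp add: sum.distrib)
      moreover have "(s + t) / 2 \<in> \<int>" using s(1) t(1) by auto
      ultimately show ?thesis unfolding Dn_def by simp
    qed
    then have "(z - x) \<bullet> (z - x) \<ge> z \<bullet> z" using z unfolding voronoi_def by blast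
    then have A: "2 * (z \<bullet> x) \<le> x \<bullet> x" unfolding inner_expand by linarith
    have zx: "z \<bullet> x = s * z$i + t * z$j"
      unfolding x_def by (simp add: inner_add_right inner_axis)
    have xx: "x \<bullet> x = s * s + t * t"
      unfolding x_def using ij by (simp add: inner_add_right inner_add_left inner_axis_axis)
    have "s * s = 1" "t * t = 1" using s(1) t(1) by auto
    then show "\<bar>z$i\<bar> + \<bar>z$j\<bar> \<le> 1" using A zx xx s(2) t(2) by linarith
  qed
qed

lemma Q_sub_P:
  assumes c: "CARD('n) \<ge> 2"
  shows "QQ \<subseteq> voronoi (Dn :: (real^'n) set)"
proof
  fix z :: "real^'n" assume z: "z \<in> QQ"
  show "z \<in> voronoi Dn" unfolding voronoi_def
  proof (intro CollectI ballI)
    fix x :: "real^'n" assume x: "x \<in> Dn"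
    define y where "y l = \<lfloor>x $ l\<rfloor>" for l
    have xy: "x $ l = of_int (y l)" for l
    proof -
      have "x $ l \<in> \<int>" using x unfolding Dn_def by blast
      then show ?thesis unfolding y_def by (metis Ints_cases floor_of_int)
    qed
    have "(\<Sum>l\<in>UNIV. x $ l) / 2 \<in> \<int>" using x unfolding Dn_def by blast
    then obtain m where m: "(\<Sum>l\<in>UNIV. x $ l) / 2 = of_int m" by (elim Ints_cases)
    have "(\<Sum>l\<in>UNIV. x $ l) = of_int (\<Sum>l\<in>UNIV. y l)" unfolding xy by simp
    then have "of_int (\<Sum>l\<in>UNIV. y l) = (of_int (2 * m) :: real)" using m by simp
    then have "(\<Sum>l\<in>UNIV. y l) = 2 * m" by (simp only: of_int_eq_iff)
    then have ev: "even (\<Sum>l\<in>UNIV. y l)" by simp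
    have Qz: "\<forall>i j. i \<noteq> j \<longrightarrow> \<bar>z$i\<bar> + \<bar>z$j\<bar> \<le> 1" using z unfolding QQ_def by blast
    have "(\<Sum>i\<in>UNIV. 2 * (z$i) * y i) \<le> (\<Sum>i\<in>UNIV. (of_int (y i))^2)"
      by (rule core[OF Qz ev c])
    moreover have "z \<bullet> x = (\<Sum>i\<in>UNIV. z$i * y i)" unfolding inner_vec_def xy by simp
    moreover have "x \<bullet> x = (\<Sum>i\<in>UNIV. (of_int (y i))^2)" unfolding inner_vec_def xy by (simp add: power2_eq_square)
    moreover have "(\<Sum>i\<in>UNIV. 2 * (z$i) * y i) = 2 * (\<Sum>i\<in>UNIV. z$i * y i)"
      by (simp add: sum_distrib_left mult.assoc)
    ultimately have "2 * (z \<bullet> x) \<le> x \<bullet> x" by linarith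
    then show "(z - x) \<bullet> (z - x) \<ge> z \<bullet> z" unfolding inner_expand by linarith
  qed
qed

lemma voronoi_eq:
  assumes "CARD('n) \<ge> 2"
  shows "voronoi (Dn :: (real^'n) set) = QQ"
  using P_sub_Q[OF assms] Q_sub_P[OF assms] by blast


definition V0 :: "(real^'n) set" where
  "V0 = {v. \<exists>i. v = axis i 1 \<or> v = axis i (-1)} \<union> {v. \<forall>i. \<bar>v$i\<bar> = 1/2}"

lemma QQ_D: "z \<in> QQ \<Longrightarrow> i \<noteq> j \<Longrightarrow> \<bar>z$i\<bar> + \<bar>z$j\<bar> \<le> 1"
  unfolding QQ_def by blast

lemma QQ_I: "(\<And>i j. i \<noteq> j \<Longrightarrow> \<bar>z$i\<bar> + \<bar>z$j\<bar> \<le> 1) \<Longrightarrow> z \<in> QQ"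
  unfolding QQ_def by blast

lemma QQ_le1:
  assumes "CARD('n) \<ge> 2" "(z::real^'n) \<in> QQ" shows "\<bar>z$i\<bar> \<le> 1"
proof -
  obtain j where "j \<noteq> i" using other_idx[OF assms(1), of i] by blast
  then have "i \<noteq> j" by simp
  then have "\<bar>z$i\<bar> + \<bar>z$j\<bar> \<le> 1" by (rule QQ_D[OF assms(2)])
  then show ?thesis by linarith
qed

lemma axis_comp: "axis i (c::real) $ l = (if l = i then c else 0)"
  by (simp add: axis_def)

lemma V0_sub_Q: "V0 \<subseteq> QQ"
proof
  fix v :: "real^'n" assume "v \<in> V0"
  then consider (ax) i c where "v = axis i c" "c = 1 \<or> c = -1" | (h) "\<forall>i. \<bar>v$i\<bar> = 1/2"
    unfolding V0_def by blast
  then show "v \<in> QQ"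
  proof cases
    case ax
    show ?thesis
    proof (rule QQ_I)
      fix p q :: 'n assume "p \<noteq> q"
      then show "\<bar>v$p\<bar> + \<bar>v$q\<bar> \<le> 1" using ax by (auto simp: axis_comp)
    qed
  next
    case h
    show ?thesis
    proof (rule QQ_I)
      fix p q :: 'n
      have "\<bar>v$p\<bar> = 1/2" "\<bar>v$q\<bar> = 1/2" using h by auto
      then show "\<bar>v$p\<bar> + \<bar>v$q\<bar> \<le> 1" by simp
    qed
  qed
qed

lemma conv_eq_top:
  fixes p q u M :: real
  assumes "p \<le> M" "q \<le> M" "0 < u" "u < 1" "(1 - u) * p + u * q = M"
  shows "p = M \<and> q = M"
proof -
  have e: "(1 - u) * (M - p) + u * (M - q) = 0" using assms(5) by (simp add: algebra_simps)
  have a: "(1 - u) * (M - p) \<ge> 0" using assms by simp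
  have b: "u * (M - q) \<ge> 0" using assms by simp
  have "(1 - u) * (M - p) = 0" using e a b by linarith
  then have "M - p = 0" using assms(4) by simp
  moreover have "u * (M - q) = 0" using e a b by linarith
  then have "M - q = 0" using assms(3) by simp
  ultimately show ?thesis by simp
qed

lemma conv_lt:
  fixes p q u :: real
  assumes "p < M" "q \<le> M" "0 < u" "u < 1"
  shows "(1 - u) * p + u * q < M"
proof -
  have "(1 - u) * p < (1 - u) * M" using assms by (intro mult_strict_left_mono) auto
  moreover have "u * q \<le> u * M" using assms by (intro mult_left_mono) auto
  ultimately have "(1 - u) * p + u * q < (1 - u) * M + u * M" by linarith
  then show ?thesis by (simp add: algebra_simps)
qed

lemma sign_le_abs: "\<bar>s\<bar> = 1 \<Longrightarrow> s * (x::real) \<le> \<bar>x\<bar>"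
proof -
  assume "\<bar>s\<bar> = 1"
  have "s * x \<le> \<bar>s * x\<bar>" by (rule abs_ge_self)
  also have "\<dots> = \<bar>s\<bar> * \<bar>x\<bar>" by (rule abs_mult)
  finally show ?thesis using \<open>\<bar>s\<bar> = 1\<close> by simp
qed

lemma axis_unique:
  assumes c2: "CARD('n) \<ge> 2" and a: "(a::real^'n) \<in> QQ" and ai: "a$i = c" and c: "c = 1 \<or> c = -1"
  shows "a = axis i c"
proof -
  have "a$l = axis i c $ l" for l
  proof (cases "l = i")
    case True then show ?thesis using ai by (simp add: axis_comp)
  next
    case False
    then have "\<bar>a$i\<bar> + \<bar>a$l\<bar> \<le> 1" by (intro QQ_D[OF a]) simp
    moreover have "\<bar>a$i\<bar> = 1" using ai c by auto
    ultimately have "a$l = 0" by linarith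
    then show ?thesis using False by (simp add: axis_comp)
  qed
  then show ?thesis by (simp add: vec_eq_iff)
qed

lemma seg_comp:
  assumes "v = (1 - u) *\<^sub>R a + u *\<^sub>R (b::real^'n)"
  shows "v$l = (1 - u) * a$l + u * b$l"
  using assms by simp

lemma axis_extreme_aux:
  assumes c2: "CARD('n) \<ge> 2" and a: "(a::real^'n) \<in> QQ" and b: "b \<in> QQ"
    and u: "0 < u" "u < 1" and v: "axis i c = (1 - u) *\<^sub>R a + u *\<^sub>R b" and c: "c = 1 \<or> c = -1"
  shows "a = axis i c"
proof -
  have "c * c = 1" using c by auto
  have "axis i c $ i = (1 - u) * a$i + u * b$i" by (rule seg_comp[OF v])
  then have "c = (1 - u) * a$i + u * b$i" by (simp add: axis_comp)
  then have "c * c = c * ((1 - u) * a$i + u * b$i)" by simp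
  then have "c * c = (1 - u) * (c * a$i) + u * (c * b$i)" by (simp add: algebra_simps)
  then have e: "(1 - u) * (c * a$i) + u * (c * b$i) = 1" using \<open>c * c = 1\<close> by simp
  have "\<bar>c\<bar> = 1" using c by auto
  have "c * a$i \<le> 1" using sign_le_abs[OF \<open>\<bar>c\<bar> = 1\<close>, of "a$i"] QQ_le1[OF c2 a, of i] by linarith
  moreover have "c * b$i \<le> 1" using sign_le_abs[OF \<open>\<bar>c\<bar> = 1\<close>, of "b$i"] QQ_le1[OF c2 b, of i] by linarith
  ultimately have "c * a$i = 1" using conv_eq_top[OF _ _ u e] by blast
  then have "c * (c * a$i) = c" by simp
  then have "a$i = c" using \<open>c * c = 1\<close> by (simp add: mult.assoc[symmetric])
  then show ?thesis by (rule axis_unique[OF c2 a _ c])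
qed

lemma half_aux:
  assumes c3: "CARD('n) \<ge> 3" and cq: "(c::real^'n) \<in> QQ" and dq: "d \<in> QQ"
    and u: "0 < u" "u < 1"
    and comb: "\<And>l. (1 - u) * (s l * c$l) + u * (s l * d$l) = 1/2"
    and s: "\<And>l. \<bar>s l\<bar> = 1"
  shows "s k * c$k \<le> 1/2"
proof (rule ccontr)
  assume "\<not> s k * c$k \<le> 1/2"
  then have gt: "s k * c$k > 1/2" by simp
  have sk: "s k * c$k \<le> \<bar>c$k\<bar>" by (rule sign_le_abs[OF s])
  have big: "s m * d$m > 1/2" if "m \<noteq> k" for m
  proof (rule ccontr)
    assume "\<not> s m * d$m > 1/2"
    then have le: "s m * d$m \<le> 1/2" by simp
    have "k \<noteq> m" using that by simp
    have "\<bar>c$k\<bar> + \<bar>c$m\<bar> \<le> 1" by (rule QQ_D[OF cq \<open>k \<noteq> m\<close>])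
    moreover have "s m * c$m \<le> \<bar>c$m\<bar>" by (rule sign_le_abs[OF s])
    ultimately have "s m * c$m < 1/2" using gt sk by linarith
    from conv_lt[OF this le u] comb[of m] show False by simp
  qed
  obtain j l where jl: "j \<noteq> k" "l \<noteq> k" "j \<noteq> l" using two_other_idx[OF c3, of k] by blast
  have "\<bar>d$j\<bar> + \<bar>d$l\<bar> \<le> 1" by (rule QQ_D[OF dq jl(3)])
  moreover have "s j * d$j \<le> \<bar>d$j\<bar>" "s l * d$l \<le> \<bar>d$l\<bar>" by (rule sign_le_abs[OF s])+
  moreover have "s j * d$j > 1/2" "s l * d$l > 1/2" using big jl by auto
  ultimately show False by linarith
qed

lemma half_extreme_aux:
  assumes c3: "CARD('n) \<ge> 3" and a: "(a::real^'n) \<in> QQ" and b: "b \<in> QQ"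
    and u: "0 < u" "u < 1" and v: "v = (1 - u) *\<^sub>R a + u *\<^sub>R b" and h: "\<forall>i. \<bar>v$i\<bar> = 1/2"
  shows "a = v"
proof -
  define s where "s l = 2 * v$l" for l
  have s1: "\<bar>s l\<bar> = 1" for l unfolding s_def using h[rule_format, of l] by (simp add: abs_mult)
  have sv: "s l * v$l = 1/2" for l
  proof -
    have "v$l * v$l = \<bar>v$l\<bar> * \<bar>v$l\<bar>" by simp
    also have "\<dots> = 1/4" by (simp add: h[rule_format, of l])
    finally have "v$l * v$l = 1/4" .
    moreover have "s l * v$l = 2 * (v$l * v$l)" by (simp add: s_def)
    ultimately show ?thesis by linarith
  qed
  have comb: "(1 - u) * (s l * a$l) + u * (s l * b$l) = 1/2" for l
  proof -
    have "v$l = (1 - u) * a$l + u * b$l" by (rule seg_comp[OF v])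
    then have "s l * v$l = s l * ((1 - u) * a$l + u * b$l)" by simp
    then have "s l * v$l = (1 - u) * (s l * a$l) + u * (s l * b$l)" by (simp add: algebra_simps)
    then show ?thesis using sv[of l] by simp
  qed
  have comb': "(1 - (1 - u)) * (s l * b$l) + (1 - u) * (s l * a$l) = 1/2" for l
    using comb[of l] by (simp add: algebra_simps)
  have u': "0 < 1 - u" "1 - u < 1" using u by auto
  have "a$l = v$l" for l
  proof -
    have "s l * a$l \<le> 1/2" by (rule half_aux[OF c3 a b u comb s1])
    moreover have "s l * b$l \<le> 1/2" by (rule half_aux[OF c3 b a u' comb' s1])
    ultimately have "s l * a$l = 1/2" using conv_eq_top[OF _ _ u comb] by blast
    then have "s l * a$l = s l * v$l" using sv[of l] by linarith
    moreover have "s l \<noteq> 0" using s1[of l] by auto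
    ultimately show ?thesis by simp
  qed
  then show ?thesis by (simp add: vec_eq_iff)
qed

lemma V0_extreme:
  assumes c3: "CARD('n) \<ge> 3" and v: "(v::real^'n) \<in> V0"
  shows "v extreme_point_of QQ"
proof -
  have c2: "CARD('n) \<ge> 2" using c3 by simp
  have vq: "v \<in> QQ" using v V0_sub_Q by blast
  have "v \<notin> open_segment a b" if a: "a \<in> QQ" and b: "b \<in> QQ" for a b
  proof
    assume "v \<in> open_segment a b"
    then obtain u where ab: "a \<noteq> b" and u: "0 < u" "u < 1" and vu: "v = (1 - u) *\<^sub>R a + u *\<^sub>R b"
      unfolding in_segment by blast
    have vu': "v = (1 - (1 - u)) *\<^sub>R b + (1 - u) *\<^sub>R a" using vu by (simp add: algebra_simps)
    have u': "0 < 1 - u" "1 - u < 1" using u by auto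
    from v consider (ax) i c where "v = axis i c" "c = 1 \<or> c = -1" | (h) "\<forall>i. \<bar>v$i\<bar> = 1/2"
      unfolding V0_def by blast
    then show False
    proof cases
      case ax
      have "a = axis i c" using axis_extreme_aux[OF c2 a b u _ ax(2)] vu ax(1) by simp
      moreover have "b = axis i c" using axis_extreme_aux[OF c2 b a u' _ ax(2)] vu' ax(1) by simp
      ultimately show False using ab by simp
    next
      case h
      have "a = v" by (rule half_extreme_aux[OF c3 a b u vu h])
      moreover have "b = v" by (rule half_extreme_aux[OF c3 b a u' vu' h])
      ultimately show False using ab by simp
    qed
  qed
  then show ?thesis unfolding extreme_point_of_def using vq by blast
qed


lemma not_extreme:
  assumes "d \<noteq> 0" "v + d \<in> QQ" "v - d \<in> QQ"
  shows "\<not> (v::real^'n) extreme_point_of QQ"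
proof
  assume e: "v extreme_point_of QQ"
  have ne: "v - d \<noteq> v + d"
  proof
    assume "v - d = v + d"
    then have "d + d = 0" by (simp add: algebra_simps)
    then have "d = 0" by (simp add: vec_eq_iff)
    then show False using assms(1) by simp
  qed
  have "v = (1 - 1/2) *\<^sub>R (v - d) + (1/2) *\<^sub>R (v + d)"
    by (simp add: vec_eq_iff algebra_simps)
  then have "v \<in> open_segment (v - d) (v + d)" unfolding in_segment using ne
    by (intro conjI exI[of _ "1/2"]) auto
  then show False using e assms unfolding extreme_point_of_def by blast
qed

lemma one_coord:
  assumes v: "(v::real^'n) \<in> QQ" and t: "\<bar>t\<bar> \<le> e"
    and cond: "\<And>q. q \<noteq> j \<Longrightarrow> \<bar>v$j\<bar> + e + \<bar>v$q\<bar> \<le> 1"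
  shows "v + t *\<^sub>R axis j 1 \<in> QQ"
proof (rule QQ_I)
  fix p q :: 'n assume pq: "p \<noteq> q"
  have comp: "(v + t *\<^sub>R axis j 1)$l = v$l + (if l = j then t else 0)" for l
    by (simp add: axis_comp)
  have tri: "\<bar>v$j + t\<bar> \<le> \<bar>v$j\<bar> + \<bar>t\<bar>" by (rule abs_triangle_ineq)
  show "\<bar>(v + t *\<^sub>R axis j 1)$p\<bar> + \<bar>(v + t *\<^sub>R axis j 1)$q\<bar> \<le> 1"
  proof (cases "p = j")
    case True
    then have "q \<noteq> j" using pq by simp
    then have "\<bar>v$j\<bar> + e + \<bar>v$q\<bar> \<le> 1" by (rule cond)
    then show ?thesis using True \<open>q \<noteq> j\<close> tri t unfolding comp by simp
  next
    case False
    show ?thesis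
    proof (cases "q = j")
      case True
      have "\<bar>v$j\<bar> + e + \<bar>v$p\<bar> \<le> 1" using False by (intro cond)
      then show ?thesis using True False tri t unfolding comp by simp
    next
      case False2: False
      have "\<bar>v$p\<bar> + \<bar>v$q\<bar> \<le> 1" by (rule QQ_D[OF v pq])
      then show ?thesis using False False2 unfolding comp by simp
    qed
  qed
qed

lemma axis_ne0: "e \<noteq> 0 \<Longrightarrow> e *\<^sub>R axis j (1::real) \<noteq> 0"
proof
  assume "e \<noteq> 0" "e *\<^sub>R axis j (1::real) = 0"
  then have "(e *\<^sub>R axis j (1::real)) $ j = 0" by simp
  then show False using \<open>e \<noteq> 0\<close> by (simp add: axis_comp)
qed

lemma one_coord_pm:
  assumes v: "(v::real^'n) \<in> QQ" and e: "e > 0"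
    and cond: "\<And>q. q \<noteq> j \<Longrightarrow> \<bar>v$j\<bar> + e + \<bar>v$q\<bar> \<le> 1"
  shows "\<not> v extreme_point_of QQ"
proof (rule not_extreme[where d="e *\<^sub>R axis j (1::real)"])
  show "e *\<^sub>R axis j (1::real) \<noteq> 0"
  proof
    assume "e *\<^sub>R axis j (1::real) = (0::real^'n)"
    then have "(e *\<^sub>R axis j (1::real)) $ j = 0" by simp
    then show False using e by (simp add: axis_comp)
  qed
  show "v + e *\<^sub>R axis j (1::real) \<in> QQ" using e by (intro one_coord[OF v _ cond]) auto
  have "v + (-e) *\<^sub>R axis j (1::real) \<in> QQ" using e by (intro one_coord[OF v _ cond]) auto
  then show "v - e *\<^sub>R axis j (1::real) \<in> QQ" by simp
qed

lemma extreme_in_V0: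
  assumes c2: "CARD('n) \<ge> 2" and ext: "(v::real^'n) extreme_point_of QQ"
  shows "v \<in> V0"
proof (rule ccontr)
  assume nv: "v \<notin> V0"
  have vq: "v \<in> QQ" using ext unfolding extreme_point_of_def by blast
  show False
  proof (cases "\<forall>i. \<bar>v$i\<bar> \<le> 1/2")
    case True
    have "\<not> (\<forall>i. \<bar>v$i\<bar> = 1/2)" using nv unfolding V0_def by blast
    then obtain j where "\<bar>v$j\<bar> \<noteq> 1/2" by blast
    then have lt: "\<bar>v$j\<bar> < 1/2" using True by (meson le_less)
    have "\<not> v extreme_point_of QQ"
    proof (rule one_coord_pm[OF vq])
      show "1/2 - \<bar>v$j\<bar> > 0" using lt by simp
      fix q assume "q \<noteq> j"
      have "\<bar>v$q\<bar> \<le> 1/2" using True by blast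
      then show "\<bar>v$j\<bar> + (1/2 - \<bar>v$j\<bar>) + \<bar>v$q\<bar> \<le> 1" by simp
    qed
    then show False using ext by blast
  next
    case False
    then obtain k where k: "\<bar>v$k\<bar> > 1/2" using not_le by blast
    define m where "m = \<bar>v$k\<bar>"
    have m1: "m \<le> 1" unfolding m_def by (rule QQ_le1[OF c2 vq])
    have oth: "\<bar>v$j\<bar> \<le> 1 - m" if "j \<noteq> k" for j
    proof -
      have "k \<noteq> j" using that by simp
      then have "\<bar>v$k\<bar> + \<bar>v$j\<bar> \<le> 1" by (rule QQ_D[OF vq])
      then show ?thesis unfolding m_def by linarith
    qed
    show False
    proof (cases "\<exists>j. j \<noteq> k \<and> \<bar>v$j\<bar> < 1 - m")
      case True
      then obtain j where j: "j \<noteq> k" "\<bar>v$j\<bar> < 1 - m" by blast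
      have "\<not> v extreme_point_of QQ"
      proof (rule one_coord_pm[OF vq])
        show "1 - m - \<bar>v$j\<bar> > 0" using j by simp
        fix q assume "q \<noteq> j"
        show "\<bar>v$j\<bar> + (1 - m - \<bar>v$j\<bar>) + \<bar>v$q\<bar> \<le> 1"
        proof (cases "q = k")
          case True then show ?thesis unfolding m_def by simp
        next
          case False
          then have "\<bar>v$q\<bar> \<le> 1 - m" by (rule oth)
          then show ?thesis using k unfolding m_def by linarith
        qed
      qed
      then show False using ext by blast
    next
      case False
      then have eqo: "\<bar>v$j\<bar> = 1 - m" if "j \<noteq> k" for j using oth[OF that] that by force
      show False
      proof (cases "m = 1")
        case True
        have "v = axis k (v$k)"
        proof -
          have "v$l = axis k (v$k) $ l" for l
          proof (cases "l = k")
            case True then show ?thesis by (simp add: axis_comp)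
          next
            case False then have "\<bar>v$l\<bar> = 0" using eqo \<open>m = 1\<close> by simp
            then show ?thesis using False by (simp add: axis_comp)
          qed
          then show ?thesis by (subst vec_eq_iff) blast
        qed
        moreover have "v$k = 1 \<or> v$k = -1"
        proof -
          have a1: "\<bar>v$k\<bar> = 1" using True unfolding m_def by simp
          show ?thesis
          proof (cases "v$k \<ge> 0")
            case True then show ?thesis using a1 by (simp add: abs_of_nonneg)
          next
            case False then show ?thesis using a1 by (simp add: abs_of_neg)
          qed
        qed
        ultimately obtain c where c: "v = axis k c" "c = 1 \<or> c = -1" by metis
        then have "v \<in> V0" unfolding V0_def by blast
        then show False using nv by blast
      next
        case False
        then have m1': "m < 1" using m1 by simp
        define \<delta> where "\<delta> = min (1 - m) (m - 1/2)"
        have dpos: "\<delta> > 0" unfolding \<delta>_def using m1' k m_def by simp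
        have d1: "\<delta> \<le> 1 - m" "\<delta> \<le> m - 1/2" unfolding \<delta>_def by auto
        define \<sigma> where "\<sigma> l = (if v$l \<ge> 0 then 1 else -1 :: real)" for l
        define e where "e l = (if l = k then 1 else -1 :: real)" for l
        define d where "d = (\<chi> l. \<delta> * \<sigma> l * e l)"
        have vs: "v$l = \<sigma> l * \<bar>v$l\<bar>" for l unfolding \<sigma>_def by simp
        have sabs: "\<bar>\<sigma> l\<bar> = 1" for l unfolding \<sigma>_def by simp
        have inQ: "v + t *\<^sub>R d \<in> QQ" if t: "t = 1 \<or> t = -1" for t
        proof -
          have td: "\<bar>t * \<delta>\<bar> = \<delta>" using t dpos by auto
          have tdb: "- \<delta> \<le> \<delta> * t" "\<delta> * t \<le> \<delta>" using t dpos by auto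
          have comp: "(v + t *\<^sub>R d)$l = \<sigma> l * (\<bar>v$l\<bar> + t * \<delta> * e l)" for l
          proof -
            have "(v + t *\<^sub>R d)$l = v$l + t * (\<delta> * \<sigma> l * e l)" unfolding d_def by simp
            also have "\<dots> = \<sigma> l * \<bar>v$l\<bar> + t * (\<delta> * \<sigma> l * e l)" using vs[of l] by simp
            also have "\<dots> = \<sigma> l * (\<bar>v$l\<bar> + t * \<delta> * e l)" by (simp add: algebra_simps)
            finally show ?thesis .
          qed
          have wabs: "\<bar>(v + t *\<^sub>R d)$l\<bar> = (if l = k then m + t * \<delta> else 1 - m - t * \<delta>)" for l
          proof -
            have "\<bar>(v + t *\<^sub>R d)$l\<bar> = \<bar>\<bar>v$l\<bar> + t * \<delta> * e l\<bar>"
              unfolding comp abs_mult sabs by simp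
            also have "\<dots> = (if l = k then m + t * \<delta> else 1 - m - t * \<delta>)"
            proof (cases "l = k")
              case True
              then have "\<bar>v$l\<bar> + t * \<delta> * e l = m + t * \<delta>" unfolding e_def m_def by simp
              moreover have "m + t * \<delta> \<ge> 0" using td d1 k m_def by linarith
              ultimately show ?thesis using True by simp
            next
              case False
              then have "\<bar>v$l\<bar> + t * \<delta> * e l = 1 - m - t * \<delta>" unfolding e_def using eqo[OF False] by simp
              moreover have "1 - m - t * \<delta> \<ge> 0" using td d1 by linarith
              ultimately show ?thesis using False by simp
            qed
            finally show ?thesis .
          qed
          show ?thesis
          proof (rule QQ_I)
            fix p q :: 'n assume pq: "p \<noteq> q"
            show "\<bar>(v + t *\<^sub>R d)$p\<bar> + \<bar>(v + t *\<^sub>R d)$q\<bar> \<le> 1"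
              unfolding wabs using pq tdb d1 by auto
          qed
        qed
        have "\<not> v extreme_point_of QQ"
        proof (rule not_extreme[where d=d])
          have "d$k = \<delta> * \<sigma> k" unfolding d_def e_def by simp
          moreover have "\<sigma> k \<noteq> 0" using sabs[of k] by auto
          ultimately have "d$k \<noteq> 0" using dpos by simp
          then show "d \<noteq> 0" by auto
          show "v + d \<in> QQ" using inQ[of 1] by simp
          show "v - d \<in> QQ" using inQ[of "-1"] by simp
        qed
        then show False using ext by blast
      qed
    qed
  qed
qed

lemma vertices_eq:
  assumes c3: "CARD('n) \<ge> 3"
  shows "vertices (voronoi (Dn :: (real^'n) set)) = V0"
proof -
  have c2: "CARD('n) \<ge> 2" using c3 by simp
  show ?thesis unfolding vertices_def voronoi_eq[OF c2]
    using V0_extreme[OF c3] extreme_in_V0[OF c2] by blast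
qed


lemma gauge_one:
  assumes a: "(a::real^'n) \<in> QQ" and ij: "i \<noteq> j" and ge: "\<bar>a$i\<bar> + \<bar>a$j\<bar> \<ge> 1"
  shows "gauge_norm QQ a = 1"
  unfolding gauge_norm_def
proof (rule cInf_eq_minimum)
  have "a = (\<lambda>v. 1 *\<^sub>R v) a" by simp
  then have "a \<in> (\<lambda>v. 1 *\<^sub>R v) ` QQ" using a by (rule image_eqI)
  then show "1 \<in> {t. t \<ge> 0 \<and> a \<in> (\<lambda>v. t *\<^sub>R v) ` QQ}" by simp
next
  fix x assume "x \<in> {t. t \<ge> 0 \<and> a \<in> (\<lambda>v. t *\<^sub>R v) ` QQ}"
  then obtain w where x0: "x \<ge> 0" and w: "w \<in> QQ" and aw: "a = x *\<^sub>R w" by blast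
  have "\<bar>a$i\<bar> = x * \<bar>w$i\<bar>" "\<bar>a$j\<bar> = x * \<bar>w$j\<bar>" using aw x0 by (simp_all add: abs_mult)
  moreover have "\<bar>w$i\<bar> + \<bar>w$j\<bar> \<le> 1" by (rule QQ_D[OF w ij])
  then have "x * (\<bar>w$i\<bar> + \<bar>w$j\<bar>) \<le> x * 1" using x0 by (intro mult_left_mono) auto
  ultimately show "1 \<le> x" using ge by (simp add: algebra_simps)
qed

lemma abs_half: "\<bar>x::real\<bar> = 1/2 \<Longrightarrow> x = 1/2 \<or> x = -1/2"
proof -
  assume a: "\<bar>x\<bar> = 1/2"
  show ?thesis
  proof (cases "x \<ge> 0")
    case True then show ?thesis using a by (simp add: abs_of_nonneg)
  next
    case False then show ?thesis using a by (simp add: abs_of_neg)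
  qed
qed

lemma V0_cases:
  assumes "v \<in> V0"
  obtains (ax) i c where "v = axis i c" "c = 1 \<or> c = -1" | (h) "\<forall>i. \<bar>v$i\<bar> = 1/2"
  using assms unfolding V0_def by blast

lemma comb_ax_half:
  assumes c2: "CARD('n) \<ge> 2" and v1: "(v1::real^'n) = axis i c" and c: "c = 1 \<or> c = -1"
    and h: "\<forall>l. \<bar>v2$l\<bar> = 1/2"
  shows "v1 + v2 \<in> V0 \<or> (\<exists>i j. i \<noteq> j \<and> \<bar>(v1+v2)$i\<bar> + \<bar>(v1+v2)$j\<bar> \<ge> 2)"
proof -
  have comp: "(v1 + v2)$l = (if l = i then c else 0) + v2$l" for l using v1 by (simp add: axis_comp)
  have hi: "v2$i = 1/2 \<or> v2$i = -1/2" using abs_half h by blast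
  have "v2$i = c/2 \<or> v2$i = -c/2" using hi c by auto
  then show ?thesis
  proof
    assume e: "v2$i = c/2"
    obtain j where "j \<noteq> i" using other_idx[OF c2, of i] by blast
    moreover have "\<bar>(v1+v2)$i\<bar> = 3/2" unfolding comp e using c by auto
    moreover have "\<bar>(v1+v2)$j\<bar> = 1/2" unfolding comp using \<open>j \<noteq> i\<close> h by simp
    ultimately show ?thesis by force
  next
    assume e: "v2$i = -c/2"
    have "\<bar>(v1+v2)$l\<bar> = 1/2" for l
    proof (cases "l = i")
      case True then show ?thesis unfolding comp using e c by auto
    next
      case False then show ?thesis unfolding comp using h by simp
    qed
    then show ?thesis unfolding V0_def by blast
  qed
qed

lemma comb:
  assumes c2: "CARD('n) \<ge> 2" and v1: "(v1::real^'n) \<in> V0" and v2: "v2 \<in> V0"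
  shows "v1 + v2 = 0 \<or> v1 + v2 \<in> V0 \<or> (\<exists>i j. i \<noteq> j \<and> \<bar>(v1+v2)$i\<bar> + \<bar>(v1+v2)$j\<bar> \<ge> 2)"
proof -
  from v1 show ?thesis
  proof (cases rule: V0_cases)
    case (ax i c)
    note A = ax
    from v2 show ?thesis
    proof (cases rule: V0_cases)
      case (ax j d)
      have comp: "(v1 + v2)$l = (if l = i then c else 0) + (if l = j then d else 0)" for l
        using A ax by (simp add: axis_comp)
      show ?thesis
      proof (cases "i = j")
        case False
        have "\<bar>(v1+v2)$i\<bar> = 1" "\<bar>(v1+v2)$j\<bar> = 1" unfolding comp using False A(2) ax(2) by auto
        then show ?thesis using False by force
      next
        case True
        show ?thesis
        proof (cases "c = d")
          case True
          obtain l where "l \<noteq> i" using other_idx[OF c2, of i] by blast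
          have "\<bar>(v1+v2)$i\<bar> = 2" unfolding comp using True \<open>i = j\<close> A(2) by auto
          moreover have "\<bar>(v1+v2)$l\<bar> = 0" unfolding comp using \<open>l \<noteq> i\<close> \<open>i = j\<close> by simp
          ultimately show ?thesis using \<open>l \<noteq> i\<close> by force
        next
          case False
          then have "c + d = 0" using A(2) ax(2) by auto
          then have "(v1 + v2)$l = 0" for l unfolding comp using \<open>i = j\<close> by simp
          then have "v1 + v2 = 0" by (simp add: vec_eq_iff)
          then show ?thesis by simp
        qed
      qed
    next
      case h
      show ?thesis using comb_ax_half[OF c2 A(1) A(2) h] by blast
    qed
  next
    case h
    note H = h
    from v2 show ?thesis
    proof (cases rule: V0_cases)
      case (ax i c)
      have "v2 + v1 \<in> V0 \<or> (\<exists>i j. i \<noteq> j \<and> \<bar>(v2+v1)$i\<bar> + \<bar>(v2+v1)$j\<bar> \<ge> 2)"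
        by (rule comb_ax_half[OF c2 ax(1) ax(2) H])
      then show ?thesis by (simp add: add.commute)
    next
      case h
      show ?thesis
      proof (cases "\<exists>i j. i \<noteq> j \<and> v1$i = v2$i \<and> v1$j = v2$j")
        case True
        then obtain i j where ij: "i \<noteq> j" "v1$i = v2$i" "v1$j = v2$j" by blast
        have two: "\<bar>(v1+v2)$l\<bar> = 1" if "v1$l = v2$l" for l
        proof -
          have "(v1+v2)$l = 2 * v1$l" using that by simp
          then have "\<bar>(v1+v2)$l\<bar> = 2 * \<bar>v1$l\<bar>" by (simp add: abs_mult)
          moreover have "\<bar>v1$l\<bar> = 1/2" using H by blast
          ultimately show ?thesis by linarith
        qed
        have "\<bar>(v1+v2)$i\<bar> = 1" by (rule two[OF ij(2)])
        moreover have "\<bar>(v1+v2)$j\<bar> = 1" by (rule two[OF ij(3)])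
        ultimately show ?thesis using ij(1) by force
      next
        case False
        have opp: "v1$l + v2$l = 0" if "v1$l \<noteq> v2$l" for l
        proof -
          have "v1$l = 1/2 \<or> v1$l = -1/2" using abs_half H by blast
          moreover have "v2$l = 1/2 \<or> v2$l = -1/2" using abs_half h by blast
          ultimately show ?thesis using that by auto
        qed
        show ?thesis
        proof (cases "\<exists>i. v1$i = v2$i")
          case False
          then have "(v1 + v2)$l = 0" for l using opp by simp
          then have "v1 + v2 = 0" by (simp add: vec_eq_iff)
          then show ?thesis by simp
        next
          case True
          then obtain i where i: "v1$i = v2$i" by blast
          define c where "c = 2 * v1$i"
          have "v1$i = 1/2 \<or> v1$i = -1/2" using abs_half H by blast
          then have c1: "c = 1 \<or> c = -1" unfolding c_def by auto
          have "(v1 + v2)$l = axis i c $ l" for l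
          proof (cases "l = i")
            case True then show ?thesis using i unfolding c_def by (simp add: axis_comp)
          next
            case ne: False
            have "v1$l \<noteq> v2$l" using \<open>\<not> (\<exists>i j. i \<noteq> j \<and> v1$i = v2$i \<and> v1$j = v2$j)\<close> i ne by blast
            then show ?thesis using opp ne by (simp add: axis_comp)
          qed
          then have "v1 + v2 = axis i c" by (subst vec_eq_iff) blast
          then have "v1 + v2 \<in> V0" using c1 unfolding V0_def by blast
          then show ?thesis by simp
        qed
      qed
    qed
  qed
qed

lemma half_sum_Q:
  assumes "(v1::real^'n) \<in> QQ" "v2 \<in> QQ"
  shows "(1/2) *\<^sub>R v1 + (1/2) *\<^sub>R v2 \<in> QQ"
proof (rule QQ_I)
  fix p q :: 'n assume pq: "p \<noteq> q"
  have "\<bar>v1$p\<bar> + \<bar>v1$q\<bar> \<le> 1" by (rule QQ_D[OF assms(1) pq])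
  moreover have "\<bar>v2$p\<bar> + \<bar>v2$q\<bar> \<le> 1" by (rule QQ_D[OF assms(2) pq])
  moreover have "\<bar>v1$p + v2$p\<bar> \<le> \<bar>v1$p\<bar> + \<bar>v2$p\<bar>" "\<bar>v1$q + v2$q\<bar> \<le> \<bar>v1$q\<bar> + \<bar>v2$q\<bar>"
    by (rule abs_triangle_ineq)+
  moreover have cp: "\<bar>((1/2) *\<^sub>R v1 + (1/2) *\<^sub>R v2)$l\<bar> = \<bar>v1$l + v2$l\<bar> / 2" for l
  proof -
    have e: "((1/2) *\<^sub>R v1 + (1/2) *\<^sub>R v2)$l = (v1$l + v2$l) / 2" by simp
    have "\<bar>(v1$l + v2$l) / 2\<bar> = \<bar>v1$l + v2$l\<bar> / 2" by (simp only: abs_divide abs_numeral)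
    then show ?thesis unfolding e .
  qed
  ultimately show "\<bar>((1/2) *\<^sub>R v1 + (1/2) *\<^sub>R v2)$p\<bar> + \<bar>((1/2) *\<^sub>R v1 + (1/2) *\<^sub>R v2)$q\<bar> \<le> 1"
    unfolding cp by linarith
qed

theorem lemma14:
  fixes u1 u2 :: "real^'n"
  assumes "CARD('n) \<ge> 4"
    and "u1 \<in> scale_set (1/2) (dual_lattice Dn)"
    and "u2 \<in> scale_set (1/2) (dual_lattice Dn)"
    and "cayley_dist (scale_set (1/2) (dual_lattice Dn))
           (scale_set (1/2) (vertices (voronoi Dn))) u1 u2 = 2"
  shows "gauge_norm (voronoi Dn) (u1 - u2) = 1"
proof -
  have c3: "CARD('n) \<ge> 3" using assms(1) by simp
  have c2: "CARD('n) \<ge> 2" using assms(1) by simp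
  define A where "A = scale_set (1/2) (dual_lattice (Dn :: (real^'n) set))"
  define S where "S = scale_set (1/2) (vertices (voronoi (Dn :: (real^'n) set)))"
  have S: "S = (\<lambda>v. (1/2) *\<^sub>R v) ` V0" unfolding S_def scale_set_def vertices_eq[OF c3] ..
  define K where "K = {k. cayley_walk A S k u1 u2}"
  have dist: "(INF k\<in>K. enat k) = 2" using assms(4) unfolding cayley_dist_def K_def A_def S_def .
  have n0: "0 \<notin> K"
  proof
    assume "0 \<in> K"
    then have "(INF k\<in>K. enat k) \<le> enat 0" by (rule INF_lower)
    then show False unfolding dist by (simp add: zero_enat_def[symmetric])
  qed
  have n1: "1 \<notin> K"
  proof
    assume "1 \<in> K"
    then have "(INF k\<in>K. enat k) \<le> enat 1" by (rule INF_lower)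
    then show False unfolding dist by (simp add: one_enat_def[symmetric])
  qed
  have y2: "2 \<in> K"
  proof (rule ccontr)
    assume "2 \<notin> K"
    have ge3: "3 \<le> k" if "k \<in> K" for k
    proof -
      have k0: "k \<noteq> 0" using that n0 by metis
      have k1: "k \<noteq> 1" using that n1 by metis
      have k2: "k \<noteq> 2" using that \<open>2 \<notin> K\<close> by metis
      show ?thesis using k0 k1 k2 by linarith
    qed
    have "enat 3 \<le> (INF k\<in>K. enat k)" by (rule INF_greatest) (simp add: ge3)
    then show False unfolding dist by (simp add: numeral_eq_enat)
  qed
  have u1A: "u1 \<in> A" using assms(2) unfolding A_def .
  have u2A: "u2 \<in> A" using assms(3) unfolding A_def .
  have ne: "u1 \<noteq> u2" using n0 u1A unfolding K_def by simp
  have nS: "u1 - u2 \<notin> S"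
  proof
    assume "u1 - u2 \<in> S"
    then have "cayley_walk A S (Suc 0) u1 u2" using u1A u2A by auto
    then show False using n1 unfolding K_def by simp
  qed
  have "cayley_walk A S (Suc (Suc 0)) u1 u2" using y2 unfolding K_def by (simp add: numeral_2_eq_2)
  then obtain w where "u1 - w \<in> S" "w - u2 \<in> S" by auto
  then obtain v1 v2 where v1: "v1 \<in> V0" "u1 - w = (1/2) *\<^sub>R v1" and v2: "v2 \<in> V0" "w - u2 = (1/2) *\<^sub>R v2"
    unfolding S by blast
  have a: "u1 - u2 = (1/2) *\<^sub>R v1 + (1/2) *\<^sub>R v2"
  proof -
    have "u1 - u2 = (u1 - w) + (w - u2)" by simp
    then show ?thesis using v1(2) v2(2) by simp
  qed
  have "v1 \<in> QQ" "v2 \<in> QQ" using V0_sub_Q v1(1) v2(1) by auto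
  then have aQ: "u1 - u2 \<in> QQ" unfolding a by (rule half_sum_Q)
  have av: "u1 - u2 = (1/2) *\<^sub>R (v1 + v2)" unfolding a by (simp add: scaleR_add_right)
  from comb[OF c2 v1(1) v2(1)] show ?thesis
  proof (elim disjE)
    assume "v1 + v2 = 0"
    then have "u1 - u2 = 0" unfolding av by simp
    then show ?thesis using ne by simp
  next
    assume "v1 + v2 \<in> V0"
    then have "u1 - u2 \<in> S" unfolding S av by blast
    then show ?thesis using nS by simp
  next
    assume "\<exists>i j. i \<noteq> j \<and> \<bar>(v1+v2)$i\<bar> + \<bar>(v1+v2)$j\<bar> \<ge> 2"
    then obtain i j where ij: "i \<noteq> j" "\<bar>(v1+v2)$i\<bar> + \<bar>(v1+v2)$j\<bar> \<ge> 2" by blast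
    have hl: "\<bar>(u1 - u2)$l\<bar> = \<bar>(v1+v2)$l\<bar> / 2" for l unfolding av by (simp add: abs_mult)
    have "\<bar>(u1 - u2)$i\<bar> + \<bar>(u1 - u2)$j\<bar> \<ge> 1" unfolding hl using ij(2) by linarith
    then have "gauge_norm QQ (u1 - u2) = 1" by (rule gauge_one[OF aQ ij(1)])
    then show ?thesis unfolding voronoi_eq[OF c2] .
  qed
qed

end
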